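(* Let $n \ge 1$ and $d \ge 1$ be integers and let $\Phi$ be a real $N \times d$ matrix satisfying the Restricted Isometry Condition with parameters $(2n, \varepsilon)$ for $\varepsilon = 0.03/\sqrt{\log n}$. Let $v \in \mathbb{R}^d$ be $n$-sparse, and let $x = \Phi v$. Then ROMP, run on input $x$ and sparsity level $n$, terminates in at most $n$ iterations and outputs a set $I \subset \{1,\dots,d\}$ such that $\mathrm{supp}(v) \subset I$ and $|I| \le 2n$.
   Context: A vector $v \in \mathbb{R}^d$ is $n$-sparse if $|\mathrm{supp}(v)| \le n$, where $\mathrm{supp}(v) = \{i : v_i \neq 0\}$. A matrix $\Phi$ satisfies the Restricted Isometry Condition (RIC) with parameters $(m,\varepsilon)$, $\varepsilon \in (0,1)$, if $(1-\varepsilon)\|w\|_2 \le \|\Phi w\|_2 \le (1+\varepsilon)\|w\|_2$ for all $m$-sparse $w \in \mathbb{R}^d$. For $I \subset \{1,\dots,d\}$, $\Phi_I$ denotes the submatrix of $\Phi$ formed by the columns indexed by $I$, and for a vector $y$, $y|_T$ denotes its restriction to the coordinates in $T$. The algorithm ROMP (Regularized Orthogonal Matching Pursuit), with input a measurement vector $x \in \mathbb{R}^N$ and sparsity level $n$, is: Initialize $I = \emptyset$ and residual $r = x$. Repeat the following until $r = 0$: (Identify) let $u = \Phi^* r$ and choose a set $J$ of the $n$ biggest coordinates of $u$ in magnitude, or all nonzero coordinates of $u$, whichever set is smaller; (Regularize) among all subsets $J_0 \subset J$ with comparable coordinates, i.e. $|u(i)| \le 2|u(j)|$ for all $i,j \in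 J_0$, choose one with maximal energy $\|u|_{J_0}\|_2$; (Update) set $I \leftarrow I \cup J_0$, $y = \operatorname{argmin}_{z \in \mathbb{R}^I} \|x - \Phi z\|_2$ (i.e. $z$ supported on $I$), and $r = x - \Phi y$. The output is the final set $I$. *)

theory Defs
  imports "HOL-Analysis.Analysis"
begin

definition supp :: "real^'d \<Rightarrow> 'd set" where
  "supp v = {i. v $ i \<noteq> 0}"

definition sparse :: "nat \<Rightarrow> real^'d \<Rightarrow> bool" where
  "sparse n v \<longleftrightarrow> card (supp v) \<le> n"

definition RIC :: "real^'d^'N \<Rightarrow> nat \<Rightarrow> real \<Rightarrow> bool" where
  "RIC Phi m eps \<longleftrightarrow> 0 < eps \<and> eps < 1 \<and>
     (\<forall>w :: real^'d. sparse m w \<longrightarrow>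
        (1 - eps) * norm w \<le> norm (Phi *v w) \<and> norm (Phi *v w) \<le> (1 + eps) * norm w)"

definition restrict_vec :: "real^'d \<Rightarrow> 'd set \<Rightarrow> real^'d" where
  "restrict_vec u T = (\<chi> i. if i \<in> T then u $ i else 0)"

definition romp_identify :: "nat \<Rightarrow> real^'d \<Rightarrow> 'd set \<Rightarrow> bool" where
  "romp_identify n u J \<longleftrightarrow>
     (if card (supp u) \<le> n then J = supp u
      else card J = n \<and> (\<forall>i\<in>J. \<forall>j. j \<notin> J \<longrightarrow> \<bar>u $ j\<bar> \<le> \<bar>u $ i\<bar>))"

definition comparable :: "real^'d \<Rightarrow> 'd set \<Rightarrow> bool" where
  "comparable u J0 \<longleftrightarrow> (\<forall>i\<in>J0. \<forall>j\<in>J0. \<bar>u $ i\<bar> \<le> 2 * \<bar>u $ j\<bar>)"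

definition romp_regularize :: "real^'d \<Rightarrow> 'd set \<Rightarrow> 'd set \<Rightarrow> bool" where
  "romp_regularize u J J0 \<longleftrightarrow> J0 \<subseteq> J \<and> comparable u J0 \<and>
     (\<forall>K. K \<subseteq> J \<longrightarrow> comparable u K \<longrightarrow>
        norm (restrict_vec u K) \<le> norm (restrict_vec u J0))"

definition ls_argmin :: "real^'d^'N \<Rightarrow> real^'N \<Rightarrow> 'd set \<Rightarrow> real^'d \<Rightarrow> bool" where
  "ls_argmin Phi x I y \<longleftrightarrow> supp y \<subseteq> I \<and>
     (\<forall>z. supp z \<subseteq> I \<longrightarrow> norm (x - Phi *v y) \<le> norm (x - Phi *v z))"

text \<open>One iteration of ROMP on input x with sparsity level n, from state (I, r) to (I', r').
  Performed only while r \<noteq> 0.  All admissible choices (ties) are allowed.\<close>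
definition romp_step :: "real^'d^'N \<Rightarrow> real^'N \<Rightarrow> nat \<Rightarrow>
    ('d set \<times> (real^'N)) \<Rightarrow> ('d set \<times> (real^'N)) \<Rightarrow> bool" where
  "romp_step Phi x n s s' \<longleftrightarrow> snd s \<noteq> 0 \<and>
     (\<exists>J J0 y. let u = transpose Phi *v snd s in
        romp_identify n u J \<and> romp_regularize u J J0 \<and>
        ls_argmin Phi x (fst s \<union> J0) y \<and>
        s' = (fst s \<union> J0, x - Phi *v y))"

end

theory Submission
  imports Defs
begin


definition en :: "real^'d \<Rightarrow> 'd set \<Rightarrow> real" where
  "en u K = (\<Sum>i\<in>K. (u$i)^2)"

lemma en_nonneg: "0 \<le> en u K"
  unfolding en_def by (simp add: sum_nonneg)

lemma norm_sq_sum: "(norm (x::real^'d))^2 = (\<Sum>i\<in>UNIV. (x$i)^2)"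
  unfolding power2_norm_eq_inner inner_vec_def by (simp add: power2_eq_square)

lemma norm_restrict_sq: "(norm (restrict_vec u K))^2 = en u K"
proof -
  have "(norm (restrict_vec u K))^2 = (\<Sum>i\<in>UNIV. (if i \<in> K then (u$i)^2 else 0))"
    unfolding norm_sq_sum restrict_vec_def by (intro sum.cong) auto
  also have "\<dots> = (\<Sum>i\<in>UNIV \<inter> K. (u$i)^2)"
    by (subst sum.inter_restrict) auto
  finally show ?thesis by (simp add: en_def)
qed

lemma supp_restrict: "supp (restrict_vec u K) \<subseteq> K"
  unfolding supp_def restrict_vec_def by auto

lemma supp_add: "supp (a + b) \<subseteq> supp a \<union> supp b"
  unfolding supp_def by auto
lemma supp_diff: "supp (a - b) \<subseteq> supp a \<union> supp b"
  unfolding supp_def by auto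
lemma supp_scale: "supp (c *\<^sub>R a) \<subseteq> supp a"
  unfolding supp_def by auto

lemma inner_disjoint: "supp a \<inter> supp b = {} \<Longrightarrow> a \<bullet> (b::real^'d) = 0"
  unfolding inner_vec_def supp_def
  by (intro sum.neutral) (auto simp: disjoint_iff)

lemma transpose_inner: "(z::real^'d) \<bullet> (transpose (Phi::real^'d^'N) *v r) = (Phi *v z) \<bullet> r"
proof -
  have "z \<bullet> (transpose Phi *v r) = (r v* Phi) \<bullet> z" using inner_commute[of z "r v* Phi"] by (simp add: transpose_matrix_vector)
  also have "\<dots> = r \<bullet> (Phi *v z)" by (rule dot_lmul_matrix)
  also have "\<dots> = (Phi *v z) \<bullet> r" by (rule inner_commute)
  finally show ?thesis .
qed

lemma sparse_sub: "supp w \<subseteq> S \<Longrightarrow> card S \<le> m \<Longrightarrow> sparse m (w::real^'d)"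
  unfolding sparse_def using card_mono[of S "supp w"] by auto

lemma ric_lo: "RIC Phi m e \<Longrightarrow> supp w \<subseteq> S \<Longrightarrow> card S \<le> m \<Longrightarrow> (1-e) * norm w \<le> norm (Phi *v w)"
  unfolding RIC_def using sparse_sub by blast
lemma ric_hi: "RIC Phi m e \<Longrightarrow> supp w \<subseteq> S \<Longrightarrow> card S \<le> m \<Longrightarrow> norm (Phi *v w) \<le> (1+e) * norm w"
  unfolding RIC_def using sparse_sub by blast

lemma ric_inner_aux:
  assumes R: "RIC Phi m e" and a: "supp a \<subseteq> S" and b: "supp b \<subseteq> S" and S: "card S \<le> m"
  shows "\<bar>(Phi *v a) \<bullet> (Phi *v b) - a \<bullet> b\<bar> \<le> (2*e+e^2) * ((norm a)^2 + (norm b)^2) / 2"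
proof -
  have e: "0 < e" "e < 1" using R unfolding RIC_def by auto
  have sp: "supp (a+b) \<subseteq> S" "supp (a-b) \<subseteq> S" using a b supp_add supp_diff by blast+
  have h1: "norm (Phi *v (a+b)) \<le> (1+e) * norm (a+b)" using ric_hi[OF R sp(1) S] .
  have l1: "(1-e) * norm (a-b) \<le> norm (Phi *v (a-b))" using ric_lo[OF R sp(2) S] .
  have H: "(norm (Phi *v (a+b)))^2 \<le> (1+e)^2 * (norm (a+b))^2"
    using power_mono[OF h1] by (simp add: power_mult_distrib)
  have Lo: "(1-e)^2 * (norm (a-b))^2 \<le> (norm (Phi *v (a-b)))^2"
    using power_mono[OF l1] e by (simp add: power_mult_distrib)
  have h2: "norm (Phi *v (a-b)) \<le> (1+e) * norm (a-b)" using ric_hi[OF R sp(2) S] .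
  have l2: "(1-e) * norm (a+b) \<le> norm (Phi *v (a+b))" using ric_lo[OF R sp(1) S] .
  have H2: "(norm (Phi *v (a-b)))^2 \<le> (1+e)^2 * (norm (a-b))^2"
    using power_mono[OF h2] by (simp add: power_mult_distrib)
  have Lo2: "(1-e)^2 * (norm (a+b))^2 \<le> (norm (Phi *v (a+b)))^2"
    using power_mono[OF l2] e by (simp add: power_mult_distrib)
  define X where "X = (Phi *v a) \<bullet> (Phi *v b)"
  define q where "q = a \<bullet> b"
  define P where "P = (norm a)^2 + (norm b)^2"
  have pol: "(norm (Phi *v (a+b)))^2 - (norm (Phi *v (a-b)))^2 = 4 * X"
    unfolding X_def matrix_vector_right_distrib matrix_vector_mult_diff_distrib power2_norm_eq_inner
    by (simp add: inner_add_left inner_add_right inner_diff_left inner_diff_right inner_commute)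
  have pa: "(norm (a+b))^2 = P + 2*q" unfolding P_def q_def power2_norm_eq_inner
    by (simp add: inner_add_left inner_add_right inner_commute)
  have pd: "(norm (a-b))^2 = P - 2*q" unfolding P_def q_def power2_norm_eq_inner
    by (simp add: inner_diff_left inner_diff_right inner_commute)
  have qP: "\<bar>q\<bar> \<le> P/2"
  proof -
    have "\<bar>q\<bar> \<le> norm a * norm b" unfolding q_def by (rule Cauchy_Schwarz_ineq2)
    also have "\<dots> \<le> P/2"
    proof -
      have "0 \<le> (norm a - norm b)^2" by simp
      then show ?thesis unfolding P_def by (simp add: power2_eq_square algebra_simps)
    qed
    finally show ?thesis .
  qed
  have up: "4*X \<le> (1+e)^2*(P+2*q) - (1-e)^2*(P-2*q)" using pol H Lo unfolding pa pd by linarith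
  have dn: "4*X \<ge> (1-e)^2*(P+2*q) - (1+e)^2*(P-2*q)" using pol H2 Lo2 unfolding pa pd by linarith
  have up': "X - q \<le> e*P + e^2*q" using up by (simp add: algebra_simps power2_eq_square)
  have dn': "X - q \<ge> - e*P + e^2*q" using dn by (simp add: algebra_simps power2_eq_square)
  have m1: "e^2*q \<le> e^2*(P/2)" using qP by (intro mult_left_mono) auto
  have m2: "-(e^2*(P/2)) \<le> e^2*q" using mult_left_mono[of "-(P/2)" q "e^2"] qP by simp
  have A1: "X - q \<le> e*P + e^2*(P/2)" using up' m1 by linarith
  have A2: "-(e*P + e^2*(P/2)) \<le> X - q" using dn' m2 by linarith
  have eq: "e*P + e^2*(P/2) = (2*e+e^2)*P/2" by (simp add: algebra_simps)
  have "\<bar>X - q\<bar> \<le> (2*e+e^2)*P/2" using A1 A2 unfolding eq by (intro abs_leI) linarith+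
  then show ?thesis unfolding X_def q_def P_def .
qed



lemma ric_inner:
  assumes R: "RIC Phi m e" and a: "supp a \<subseteq> S" and b: "supp b \<subseteq> S" and S: "card S \<le> m"
  shows "\<bar>(Phi *v a) \<bullet> (Phi *v b) - a \<bullet> b\<bar> \<le> (2*e+e^2) * norm a * norm b"
proof (cases "a = 0 \<or> b = 0")
  case True then show ?thesis by auto
next
  case False
  then have na: "norm a > 0" and nb: "norm b > 0" by auto
  define t where "t = sqrt (norm b / norm a)"
  have t: "t > 0" using na nb unfolding t_def by simp
  have t2: "t^2 = norm b / norm a" unfolding t_def using na nb by simp
  have s1: "supp (t *\<^sub>R a) \<subseteq> S" using a supp_scale by blast
  have s2: "supp ((1/t) *\<^sub>R b) \<subseteq> S" using b supp_scale by blast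
  note main = ric_inner_aux[OF R s1 s2 S]
  have e1: "(Phi *v (t *\<^sub>R a)) \<bullet> (Phi *v ((1/t) *\<^sub>R b)) = (Phi *v a) \<bullet> (Phi *v b)"
    using t by (simp add: matrix_vector_mult_scaleR)
  have e2: "(t *\<^sub>R a) \<bullet> ((1/t) *\<^sub>R b) = a \<bullet> b" using t by simp
  have e3: "(norm (t *\<^sub>R a))^2 = norm a * norm b"
    using t t2 na by (simp add: power_mult_distrib power2_eq_square field_simps)
  have e4: "(norm ((1/t) *\<^sub>R b))^2 = norm a * norm b"
    using t t2 na nb by (simp add: power_mult_distrib power_divide field_simps power2_eq_square)
  show ?thesis using main unfolding e1 e2 e3 e4 by simp
qed



lemma sum_compare:
  fixes f :: "'a \<Rightarrow> real"
  assumes fin: "finite X" "finite Y" and c: "card X \<le> card Y"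
    and le: "\<And>a b. a \<in> X \<Longrightarrow> b \<in> Y \<Longrightarrow> f a \<le> f b"
    and nn: "\<And>a. a \<in> X \<Longrightarrow> 0 \<le> f a" "\<And>b. b \<in> Y \<Longrightarrow> 0 \<le> f b"
  shows "sum f X \<le> sum f Y"
proof (cases "X = {}")
  case True then show ?thesis using nn(2) by (simp add: sum_nonneg)
next
  case False
  define m where "m = Max (f ` X)"
  have "m \<in> f ` X" unfolding m_def using False fin(1) by (intro Max_in) auto
  then obtain a0 where a0: "a0 \<in> X" "f a0 = m" by auto
  have m0: "0 \<le> m" using a0 nn(1) by auto
  have "sum f X \<le> of_nat (card X) * m"
    by (rule sum_bounded_above) (simp add: m_def fin(1))
  also have "\<dots> \<le> of_nat (card Y) * m" using c m0 by (simp add: mult_right_mono)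
  also have "\<dots> \<le> sum f Y" by (rule sum_bounded_below) (use le a0 in auto)
  finally show ?thesis .
qed

lemma ex_L: "1 \<le> (n::nat) \<Longrightarrow> \<exists>L. 2^L \<le> n \<and> n < 2^(Suc L)"
proof -
  assume n: "1 \<le> n"
  have ex: "\<exists>L. n < (2::nat)^(Suc L)"
  proof -
    have "n < 2 * 2^n" using less_exp[of n] by linarith
    then show ?thesis by (intro exI[of _ n]) simp
  qed
  define L where "L = (LEAST L. n < (2::nat)^(Suc L))"
  have L1: "n < 2^(Suc L)" unfolding L_def by (rule LeastI_ex[OF ex])
  have L2: "2^L \<le> n"
  proof (cases L)
    case 0 then show ?thesis using n by simp
  next
    case (Suc L')
    have "\<not> n < 2^(Suc L')" using Suc L_def not_less_Least[of L' "\<lambda>L. n < (2::nat)^(Suc L)"] by simp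
    then show ?thesis using Suc by simp
  qed
  show ?thesis using L1 L2 by blast
qed

lemma ln2_ge: "1/2 \<le> ln (2::real)"
proof -
  have "exp (1/2::real) \<le> 1 + 2 * (1/2)" by (rule real_exp_bound_lemma) auto
  then have "exp (1/2::real) \<le> 2" by simp
  then have "ln (exp (1/2::real)) \<le> ln 2" by (subst ln_le_cancel_iff) auto
  then show ?thesis by simp
qed

lemma comparable_sub: "comparable u K \<Longrightarrow> K' \<subseteq> K \<Longrightarrow> comparable u K'"
  unfolding comparable_def by blast

lemma comparable_single: "comparable u {j}"
  unfolding comparable_def by auto

lemma bad_good:
  fixes u :: "real^'d"
  assumes comp: "comparable u J0" and sub: "J0 \<subseteq> supp u"
    and c: "card (J0 \<inter> T) < card (J0 - T)"
  shows "en u J0 < 8 * en u (J0 - T)"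
proof -
  have fin: "finite J0" by simp
  define A where "A = J0 - T"
  have "card A > 0" using c unfolding A_def by linarith
  then have Ane: "A \<noteq> {}" by auto
  then have J0ne: "J0 \<noteq> {}" unfolding A_def by auto
  define M2 where "M2 = Max ((\<lambda>i. (u$i)^2) ` J0)"
  have "M2 \<in> (\<lambda>i. (u$i)^2) ` J0" unfolding M2_def using J0ne fin by (intro Max_in) auto
  then obtain j where j: "j \<in> J0" "(u$j)^2 = M2" by auto
  have M2pos: "M2 > 0" using j sub unfolding supp_def by auto
  have le: "\<And>i. i \<in> J0 \<Longrightarrow> (u$i)^2 \<le> M2" unfolding M2_def using fin by auto
  have ge: "\<And>i. i \<in> A \<Longrightarrow> M2/4 \<le> (u$i)^2"
  proof -
    fix i assume i: "i \<in> A"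
    then have "i \<in> J0" unfolding A_def by auto
    then have "\<bar>u$j\<bar> \<le> 2 * \<bar>u$i\<bar>" using comp j(1) unfolding comparable_def by auto
    then have "\<bar>u$j\<bar>^2 \<le> (2 * \<bar>u$i\<bar>)^2" by (rule power_mono) simp
    then show "M2/4 \<le> (u$i)^2" using j(2) by (simp add: power_mult_distrib)
  qed
  have "J0 = A \<union> (J0 \<inter> T)" unfolding A_def by auto
  then have cardJ: "card J0 = card A + card (J0 \<inter> T)"
    by (metis card_Un_disjoint finite A_def Diff_disjoint Int_Diff_disjoint inf_commute)
  have "en u J0 \<le> of_nat (card J0) * M2" unfolding en_def by (rule sum_bounded_above) (rule le)
  also have "\<dots> < of_nat (2 * card A) * M2" using cardJ c M2pos unfolding A_def by simp
  also have "\<dots> = 8 * (of_nat (card A) * (M2/4))" by simp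
  also have "of_nat (card A) * (M2/4) \<le> en u A" unfolding en_def by (rule sum_bounded_below) (rule ge)
  finally show ?thesis unfolding A_def by simp
qed



lemma reg:
  fixes u :: "real^'d"
  assumes cJ: "card J \<le> n" and n: "2 \<le> n"
  shows "\<exists>K \<subseteq> J. comparable u K \<and> en u J \<le> 4 * ln (real n) * en u K"
proof (cases "\<forall>j\<in>J. u$j = 0")
  case True
  have "en u J = 0" unfolding en_def using True by simp
  then show ?thesis by (intro exI[of _ "{}"]) (auto simp: comparable_def en_def)
next
  case False
  then have Jne: "J \<noteq> {}" by auto
  have fin: "finite J" by simp
  define M where "M = Max ((\<lambda>j. \<bar>u$j\<bar>) ` J)"
  have leM: "\<And>j. j \<in> J \<Longrightarrow> \<bar>u$j\<bar> \<le> M" unfolding M_def using fin by auto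
  have "M \<in> (\<lambda>j. \<bar>u$j\<bar>) ` J" unfolding M_def using Jne fin by (intro Max_in) auto
  then obtain jm where jm: "jm \<in> J" "\<bar>u$jm\<bar> = M" by auto
  obtain j1 where j1: "j1 \<in> J" "u$j1 \<noteq> 0" using False by auto
  have Mpos: "M > 0" using leM[OF j1(1)] j1(2) by linarith
  obtain L where L: "2^L \<le> n" "n < 2^(Suc L)" using ex_L[of n] n by auto
  have L1: "1 \<le> L" using L n by (cases L) auto
  define B where "B k = {j\<in>J. M/2^(Suc k) < \<bar>u$j\<bar> \<and> \<bar>u$j\<bar> \<le> M/2^k}" for k :: nat
  define H where "H = {j\<in>J. M/2^L < \<bar>u$j\<bar>}"
  define R where "R = {j\<in>J. \<bar>u$j\<bar> \<le> M/2^L}"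
  have cover: "\<And>j. j \<in> J \<Longrightarrow> M/2^l < \<bar>u$j\<bar> \<Longrightarrow> \<exists>k<l. j \<in> B k" for l
  proof (induction l)
    case 0 then show ?case using leM by fastforce
  next
    case (Suc l)
    show ?case
    proof (cases "M/2^l < \<bar>u$j\<bar>")
      case True then show ?thesis using Suc by (meson less_SucI)
    next
      case f: False
      then have "j \<in> B l" unfolding B_def using Suc.prems by auto
      then show ?thesis by blast
    qed
  qed
  have Hsub: "H \<subseteq> \<Union> (B ` {..<L})" unfolding H_def using cover by blast
  have disj: "\<forall>i\<in>{..<L}. \<forall>k\<in>{..<L}. i \<noteq> k \<longrightarrow> B i \<inter> B k = {}"
  proof -
    have d: "B i \<inter> B k = {}" if ik: "i < k" for i k
    proof -
      have "(2::real)^(Suc i) \<le> 2^k" using ik by (intro power_increasing) auto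
      then have mono: "M/2^k \<le> M/2^(Suc i)" using Mpos by (intro divide_left_mono) auto
      show ?thesis unfolding B_def using mono by auto
    qed
    show ?thesis
    proof (intro ballI impI)
      fix i k :: nat assume "i \<noteq> k"
      then consider "i < k" | "k < i" by linarith
      then show "B i \<inter> B k = {}"
      proof cases
        case 1 then show ?thesis by (rule d)
      next
        case 2 then have "B k \<inter> B i = {}" by (rule d)
        then show ?thesis by blast
      qed
    qed
  qed
  define E where "E = Max ((\<lambda>k. en u (B k)) ` {..<L})"
  have "E \<in> (\<lambda>k. en u (B k)) ` {..<L}" unfolding E_def
  proof (intro Max_in)
    show "(\<lambda>k. en u (B k)) ` {..<L} \<noteq> {}" using L1 by (metis empty_iff image_is_empty lessThan_iff less_le_trans zero_less_one)
  qed auto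
  then obtain kb where kb: "kb < L" "en u (B kb) = E" by auto
  have leE: "\<And>k. k < L \<Longrightarrow> en u (B k) \<le> E" unfolding E_def by auto
  have enH: "en u H \<le> real L * E"
  proof -
    have "en u H \<le> en u (\<Union> (B ` {..<L}))" unfolding en_def
      by (rule sum_mono2) (use Hsub in auto)
    also have "\<dots> = (\<Sum>k<L. en u (B k))" unfolding en_def
      by (rule sum.UNION_disjoint) (use disj in auto)
    also have "\<dots> \<le> of_nat (card {..<L}) * E" by (rule sum_bounded_above) (use leE in auto)
    finally show ?thesis by simp
  qed
  have enR: "en u R \<le> M^2"
  proof -
    have "en u R \<le> of_nat (card R) * (M/2^L)^2" unfolding en_def
    proof (rule sum_bounded_above)
      fix j assume "j \<in> R"
      then have "\<bar>u$j\<bar> \<le> M/2^L" unfolding R_def by auto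
      then have "\<bar>u$j\<bar>^2 \<le> (M/2^L)^2" by (rule power_mono) simp
      then show "(u$j)^2 \<le> (M/2^L)^2" by simp
    qed
    also have "\<dots> \<le> real n * (M/2^L)^2"
    proof -
      have "card R \<le> card J" unfolding R_def by (rule card_mono) auto
      then show ?thesis using cJ by (intro mult_right_mono) auto
    qed
    also have "\<dots> = (real n / 4^L) * M^2"
    proof -
      have p4: "(2::real)^L * 2^L = 4^L" by (simp flip: power_mult_distrib)
      show ?thesis by (simp add: power_divide power2_eq_square p4[symmetric])
    qed
    also have "\<dots> \<le> 1 * M^2"
    proof (rule mult_right_mono)
      have "n < 2^(Suc L)" by (rule L(2))
      also have "(2::nat)^(Suc L) \<le> 2^(2*L)" using L1 by (intro power_increasing) auto
      also have "(2::nat)^(2*L) = 4^L" by (simp add: power_mult)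
      finally have "n < 4^L" .
      then have "real n < real (4^L)" by (simp only: of_nat_less_iff)
      then have "real n \<le> 4^L" by simp
      then show "real n / 4^L \<le> 1" by simp
    qed simp
    finally show ?thesis by simp
  qed
  have JHR: "en u J = en u H + en u R"
  proof -
    have "J = H \<union> R" "H \<inter> R = {}" unfolding H_def R_def by auto
    then show ?thesis unfolding en_def by (simp add: sum.union_disjoint)
  qed
  have "(u$jm)^2 = M^2" using jm(2) power2_abs[of "u$jm"] by simp
  then have enjm: "en u {jm} = M^2" unfolding en_def by simp
  have compB: "comparable u (B k)" for k
    unfolding comparable_def B_def
  proof (intro ballI)
    fix i j assume i: "i \<in> {j \<in> J. M / 2 ^ Suc k < \<bar>u $ j\<bar> \<and> \<bar>u $ j\<bar> \<le> M / 2 ^ k}"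
      and j: "j \<in> {j \<in> J. M / 2 ^ Suc k < \<bar>u $ j\<bar> \<and> \<bar>u $ j\<bar> \<le> M / 2 ^ k}"
    have "M / 2^k = 2 * (M / 2^Suc k)" by simp
    moreover have "\<bar>u$i\<bar> \<le> M/2^k" using i by blast
    moreover have "M/2^Suc k < \<bar>u$j\<bar>" using j by blast
    ultimately show "\<bar>u$i\<bar> \<le> 2 * \<bar>u$j\<bar>" by linarith
  qed
  have lnb: "real L + 1 \<le> 4 * ln (real n)"
  proof -
    have "real (2^L) \<le> real n" using L(1) by (simp only: of_nat_le_iff)
    then have "ln (2^L) \<le> ln (real n)" using n by (subst ln_le_cancel_iff) auto
    then have "real L * ln 2 \<le> ln (real n)" by (simp add: ln_realpow)
    moreover have "real L * (1/2) \<le> real L * ln 2" using ln2_ge by (intro mult_left_mono) auto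
    ultimately show ?thesis using L1 by linarith
  qed
  define F where "F = max E (M^2)"
  obtain K where K: "K \<subseteq> J" "comparable u K" "en u K = F"
  proof (cases "E \<le> M^2")
    case True then show ?thesis using that[of "{jm}"] jm enjm comparable_single unfolding F_def by auto
  next
    case False then show ?thesis using that[of "B kb"] kb compB unfolding F_def B_def by auto
  qed
  have F0: "0 \<le> F" unfolding F_def by (metis max.coboundedI2 zero_le_power2)
  have "en u J \<le> real L * E + M^2" using JHR enH enR by linarith
  also have "\<dots> \<le> real L * F + F" unfolding F_def by (intro add_mono mult_left_mono) auto
  also have "\<dots> = (real L + 1) * F" by (simp add: algebra_simps)
  also have "\<dots> \<le> 4 * ln (real n) * F" using lnb F0 by (intro mult_right_mono) auto
  finally show ?thesis using K by auto
qed



lemma ls_exists: "\<exists>y. ls_argmin (Phi::real^'d^'N) x I y"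
proof -
  define Z where "Z = {z::real^'d. supp z \<subseteq> I}"
  have subZ: "subspace Z" unfolding subspace_def Z_def supp_def
    by (auto simp: subset_iff, (metis add.left_neutral)+)
  have lin: "linear ((*v) Phi)" by (rule matrix_vector_mul_linear)
  define S where "S = (*v) Phi ` Z"
  have "subspace S" unfolding S_def by (rule linear_subspace_image[OF lin subZ])
  then have cl: "closed S" by (rule closed_subspace)
  have "(0::real^'d) \<in> Z" unfolding Z_def supp_def by simp
  then have ne: "S \<noteq> {}" unfolding S_def by auto
  obtain p where p: "p \<in> S" "\<And>q. q \<in> S \<Longrightarrow> dist x p \<le> dist x q"
    using distance_attains_inf[OF cl ne, of x] by blast
  obtain y where y: "supp y \<subseteq> I" "p = Phi *v y" using p(1) unfolding S_def Z_def by auto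
  have "ls_argmin Phi x I y" unfolding ls_argmin_def
  proof (intro conjI allI impI)
    show "supp y \<subseteq> I" by (rule y(1))
    fix z assume z: "supp z \<subseteq> I"
    have "Phi *v z \<in> S" unfolding S_def Z_def using z by auto
    then show "norm (x - Phi *v y) \<le> norm (x - Phi *v z)" using p(2) y(2) by (simp add: dist_norm)
  qed
  then show ?thesis by blast
qed

lemma identify_exists: "\<exists>J. romp_identify n (u::real^'d) J"
proof (cases "card (supp u) \<le> n")
  case True then show ?thesis unfolding romp_identify_def by auto
next
  case False
  define F where "F = {J::'d set. card J = n}"
  define g where "g J = (\<Sum>i\<in>J. \<bar>u$i\<bar>)" for J
  have "n \<le> card (UNIV::'d set)" using False card_mono[of UNIV "supp u"] by auto
  then obtain J1 :: "'d set" where "card J1 = n" using obtain_subset_with_card_n by metis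
  then have Fne: "F \<noteq> {}" unfolding F_def by auto
  have Ffin: "finite F" unfolding F_def by simp
  have "Max (g ` F) \<in> g ` F" using Fne Ffin by (intro Max_in) auto
  then obtain J where J: "J \<in> F" "g J = Max (g ` F)" by auto
  have Jmax: "\<And>K. K \<in> F \<Longrightarrow> g K \<le> g J" using J(2) Ffin by auto
  have "\<forall>i\<in>J. \<forall>j. j \<notin> J \<longrightarrow> \<bar>u$j\<bar> \<le> \<bar>u$i\<bar>"
  proof (intro ballI allI impI, rule ccontr)
    fix i j assume i: "i \<in> J" and j: "j \<notin> J" and c: "\<not> \<bar>u$j\<bar> \<le> \<bar>u$i\<bar>"
    define K where "K = insert j (J - {i})"
    have n0: "0 < n" using J(1) i unfolding F_def using card_gt_0_iff by fastforce
    have cK: "card K = n" using J(1) i j n0 unfolding K_def F_def by (simp add: card_Diff_singleton)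
    have "g K = \<bar>u$j\<bar> + g (J - {i})" unfolding K_def g_def using j by (simp add: sum.insert)
    also have "g J = \<bar>u$i\<bar> + g (J - {i})" unfolding g_def using i by (simp add: sum.remove)
    then have "g K > g J" using c calculation by linarith
    moreover have "g K \<le> g J" using Jmax cK unfolding F_def by auto
    ultimately show False by linarith
  qed
  then show ?thesis using J(1) False unfolding romp_identify_def F_def by auto
qed

lemma regularize_exists: "\<exists>J0. romp_regularize (u::real^'d) J J0"
proof -
  define C where "C = {K. K \<subseteq> J \<and> comparable u K}"
  define g where "g K = norm (restrict_vec u K)" for K
  have Cne: "{} \<in> C" unfolding C_def comparable_def by auto
  have Cfin: "finite C" unfolding C_def by simp
  have "Max (g ` C) \<in> g ` C" using Cne Cfin by (intro Max_in) auto
  then obtain J0 where J0: "J0 \<in> C" "g J0 = Max (g ` C)" by auto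
  have "\<And>K. K \<in> C \<Longrightarrow> g K \<le> g J0" using J0(2) Cfin by auto
  then show ?thesis using J0(1) unfolding romp_regularize_def C_def g_def by blast
qed

lemma step_exists:
  assumes "r \<noteq> 0"
  shows "\<exists>s'. romp_step (Phi::real^'d^'N) x n (I, r) s'"
proof -
  define u where "u = transpose Phi *v r"
  obtain J where J: "romp_identify n u J" using identify_exists by blast
  obtain J0 where J0: "romp_regularize u J J0" using regularize_exists by blast
  obtain y where y: "ls_argmin Phi x (I \<union> J0) y" using ls_exists by blast
  have "romp_step Phi x n (I, r) (I \<union> J0, x - Phi *v y)"
    unfolding romp_step_def Let_def fst_conv snd_conv using assms J J0 y unfolding u_def by blast
  then show ?thesis by blast
qed



lemma normal_eq:
  assumes ls: "ls_argmin (Phi::real^'d^'N) x I y" and z: "supp z \<subseteq> I"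
  shows "(Phi *v z) \<bullet> (x - Phi *v y) = 0"
proof -
  define r where "r = x - Phi *v y"
  define g where "g = (Phi *v z) \<bullet> r"
  define q where "q = (Phi *v z) \<bullet> (Phi *v z)"
  have q0: "0 \<le> q" unfolding q_def by simp
  define t where "t = g / (q+1)"
  have sy: "supp y \<subseteq> I" using ls unfolding ls_argmin_def by auto
  have st: "supp (y + t *\<^sub>R z) \<subseteq> I" using supp_add[of y "t *\<^sub>R z"] supp_scale[of t z] sy z by blast
  have "norm (x - Phi *v y) \<le> norm (x - Phi *v (y + t *\<^sub>R z))" using ls st unfolding ls_argmin_def by blast
  moreover have "x - Phi *v (y + t *\<^sub>R z) = r - t *\<^sub>R (Phi *v z)" unfolding r_def
    by (simp add: matrix_vector_right_distrib matrix_vector_mult_scaleR)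
  ultimately have "norm r \<le> norm (r - t *\<^sub>R (Phi *v z))" unfolding r_def by simp
  then have "(norm r)^2 \<le> (norm (r - t *\<^sub>R (Phi *v z)))^2" by (rule power_mono) simp
  also have "(norm (r - t *\<^sub>R (Phi *v z)))^2 = (norm r)^2 - 2*t*g + t^2 * q"
    unfolding power2_norm_eq_inner g_def q_def
    by (simp add: inner_diff_left inner_diff_right inner_commute power2_eq_square algebra_simps)
  finally have h: "0 \<le> t^2*q - 2*t*g" by simp
  have q1: "q + 1 \<noteq> 0" using q0 by simp
  have tq: "(q+1)*t = g" unfolding t_def using q1 by simp
  have "(q+1)^2 * (t^2*q - 2*t*g) = ((q+1)*t)^2*q - 2*(q+1)*((q+1)*t)*g"
    by (simp add: power2_eq_square algebra_simps)
  also have "\<dots> = g^2*q - 2*(q+1)*g*g" using tq by simp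
  also have "\<dots> = g^2 * (-(q+2))" by (simp add: power2_eq_square algebra_simps)
  finally have "(q+1)^2 * (t^2*q - 2*t*g) = g^2 * (-(q+2))" .
  moreover have "0 \<le> (q+1)^2 * (t^2*q - 2*t*g)" using h by simp
  ultimately have "0 \<le> g^2 * (-(q+2))" by simp
  then have "g^2 * (q+2) \<le> 0" by (simp add: algebra_simps)
  then have "g^2 \<le> 0" using q0 by (smt (verit) mult_pos_pos zero_le_power2)
  then have "g = 0" by simp
  then show ?thesis unfolding g_def r_def .
qed

lemma restrict_inner: "restrict_vec w A \<bullet> w = (norm (restrict_vec w A))^2"
  unfolding power2_norm_eq_inner inner_vec_def restrict_vec_def by (intro sum.cong) auto

lemma en_mono: "A \<subseteq> B \<Longrightarrow> en u A \<le> en u B"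
  unfolding en_def by (rule sum_mono2) auto

lemma en_supp: "en u X \<le> en u (supp u)"
proof -
  have "en u X = en u (X \<inter> supp u)" unfolding en_def supp_def
    by (rule sum.mono_neutral_right) auto
  also have "\<dots> \<le> en u (supp u)" by (rule en_mono) auto
  finally show ?thesis .
qed

lemma numeric:
  fixes e Ln :: real
  assumes e: "0 < e" and e2: "e^2 * Ln = 9/10000" and Ln: "1/2 \<le> Ln"
  shows "2*(2*e+e^2)/(1-e) \<le> 19/100" "32 * Ln * (2*(2*e+e^2)/(1-e))^2 < (1 - 2*(2*e+e^2)/(1-e))^2"
proof -
  have a: "e^2 \<le> 9/5000"
  proof -
    have "e^2 * (1/2) \<le> e^2 * Ln" using Ln by (intro mult_left_mono) auto
    then show ?thesis using e2 by simp
  qed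
  have ee: "e \<le> 17/400"
  proof (rule ccontr)
    assume "\<not> e \<le> 17/400"
    then have "17/400 < e" by simp
    then have "(17/400::real) * (17/400) < e * e" by (intro mult_strict_mono) auto
    then show False using a unfolding power2_eq_square by linarith
  qed
  define q where "q = (2+e)/(1-e)"
  have q0: "0 \<le> q" unfolding q_def using ee e by (intro divide_nonneg_nonneg) auto
  have qb: "q \<le> 107/50" unfolding q_def using ee e by (simp add: field_simps)
  have c: "2*(2*e+e^2)/(1-e) = 2*e*q" unfolding q_def by (simp add: power2_eq_square field_simps)
  have cb: "2*e*q \<le> 19/100"
  proof -
    have "2*e*q \<le> 2*(17/400)*(107/50)" using ee qb e q0 by (intro mult_mono) auto
    then show ?thesis by simp
  qed
  then show "2*(2*e+e^2)/(1-e) \<le> 19/100" using c by simp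
  have "32 * Ln * (2*e*q)^2 = 128 * (e^2*Ln) * q^2" by (simp add: power_mult_distrib algebra_simps)
  also have "\<dots> = 1152/10000 * q^2" unfolding e2 by simp
  also have "\<dots> \<le> 1152/10000 * (107/50)^2" using qb q0 by (intro mult_left_mono power_mono) auto
  also have "\<dots> < (1 - 19/100)^2" by (simp add: power2_eq_square)
  also have "\<dots> \<le> (1 - 2*e*q)^2" using cb by (intro power_mono) auto
  finally show "32 * Ln * (2*(2*e+e^2)/(1-e))^2 < (1 - 2*(2*e+e^2)/(1-e))^2" using c by simp
qed



lemma core:
  fixes Phi :: "real^'d^'N" and v y :: "real^'d"
  assumes R: "RIC Phi (2*n) e" and e2: "e^2 * ln (real n) = 9/10000" and lnn: "1/2 \<le> ln (real n)"
    and n2: "2 \<le> n"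
    and sp: "card (supp v) \<le> n"
    and ls: "ls_argmin Phi (Phi *v v) I y"
    and inv: "card (I - supp v) \<le> card (I \<inter> supp v)"
    and rnz: "Phi *v v - Phi *v y \<noteq> 0"
    and Jd: "romp_identify n (transpose Phi *v (Phi *v v - Phi *v y)) J"
    and J0d: "romp_regularize (transpose Phi *v (Phi *v v - Phi *v y)) J J0"
  shows "J0 \<inter> I = {} \<and> J0 \<noteq> {} \<and> card (J0 - supp v) \<le> card (J0 \<inter> supp v)"
proof -
  define T where "T = supp v"
  define x where "x = Phi *v v"
  define r where "r = x - Phi *v y"
  define u where "u = transpose Phi *v r"
  have Jd': "romp_identify n u J" using Jd unfolding u_def r_def x_def .
  have J0d': "romp_regularize u J J0" using J0d unfolding u_def r_def x_def .
  have e: "0 < e" "e < 1" using R unfolding RIC_def by auto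
  have sy: "supp y \<subseteq> I" using ls unfolding ls_argmin_def by auto
  have cT: "card T \<le> n" using sp T_def by simp
  have cIT: "card (I \<union> T) \<le> 2*n"
  proof -
    have "I \<union> T = (I - T) \<union> T" by auto
    moreover have "card ((I - T) \<union> T) = card (I - T) + card T" by (rule card_Un_disjoint) auto
    ultimately have "card (I \<union> T) = card (I - T) + card T" by simp
    moreover have "card (I \<inter> T) \<le> card T" by (rule card_mono) auto
    ultimately show ?thesis using inv cT unfolding T_def by linarith
  qed
  have ls': "ls_argmin Phi x I y" using ls x_def by simp
  have uI: "u$i = 0" if "i \<in> I" for i
  proof -
    have "supp (axis i (1::real)) \<subseteq> I" using that unfolding supp_def axis_def by auto
    then have "(Phi *v axis i 1) \<bullet> r = 0" using normal_eq[OF ls'] r_def by blast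
    then have "axis i 1 \<bullet> u = 0" unfolding u_def by (simp only: transpose_inner)
    then show ?thesis by (simp add: cart_eq_inner_axis inner_commute)
  qed
  have Jsupp: "J \<subseteq> supp u"
  proof (cases "card (supp u) \<le> n")
    case True then show ?thesis using Jd' unfolding romp_identify_def by simp
  next
    case False
    then have J: "card J = n" "\<forall>i\<in>J. \<forall>j. j \<notin> J \<longrightarrow> \<bar>u$j\<bar> \<le> \<bar>u$i\<bar>"
      using Jd' unfolding romp_identify_def by auto
    show ?thesis
    proof
      fix i assume i: "i \<in> J"
      show "i \<in> supp u"
      proof (rule ccontr)
        assume "i \<notin> supp u"
        then have "u$i = 0" unfolding supp_def by auto
        then have "supp u \<subseteq> J" using J(2) i unfolding supp_def by force
        then have "card (supp u) \<le> card J" by (intro card_mono) auto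
        then show False using False J(1) by simp
      qed
    qed
  qed
  have J0J: "J0 \<subseteq> J" and compJ0: "comparable u J0"
    and J0max: "\<And>K. K \<subseteq> J \<Longrightarrow> comparable u K \<Longrightarrow> norm (restrict_vec u K) \<le> norm (restrict_vec u J0)"
    using J0d' unfolding romp_regularize_def by auto
  have J0supp: "J0 \<subseteq> supp u" using J0J Jsupp by auto
  have disjI: "J0 \<inter> I = {}" using J0supp uI unfolding supp_def by auto
  have cJ: "card J \<le> n"
    using Jd' unfolding romp_identify_def by (auto split: if_splits)
  have rv: "r = Phi *v (v - y)" unfolding r_def x_def by (simp add: matrix_vector_mult_diff_distrib)
  have unz: "u \<noteq> 0"
  proof
    assume u0: "u = 0"
    have "(v - y) \<bullet> u = (Phi *v (v - y)) \<bullet> r" unfolding u_def by (rule transpose_inner)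
    then have "r \<bullet> r = 0" using u0 rv by simp
    then show False using rnz unfolding r_def x_def by simp
  qed
  then obtain j where j: "u$j \<noteq> 0" by (metis vec_eq_iff zero_index)
  have Jne: "J \<noteq> {}"
  proof (cases "card (supp u) \<le> n")
    case True then have "J = supp u" using Jd' unfolding romp_identify_def by simp
    then show ?thesis using j unfolding supp_def by auto
  next
    case False then have "card J = n" using Jd' unfolding romp_identify_def by auto
    then show ?thesis using n2 by auto
  qed
  then obtain j1 where j1: "j1 \<in> J" by auto
  have J0ne: "J0 \<noteq> {}"
  proof
    assume J00: "J0 = {}"
    have "norm (restrict_vec u {j1}) \<le> norm (restrict_vec u J0)"
      using J0max j1 comparable_single by auto
    then have "(norm (restrict_vec u {j1}))^2 \<le> (norm (restrict_vec u J0))^2" by (rule power_mono) simp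
    then have "en u {j1} \<le> en u J0" by (simp only: norm_restrict_sq)
    then have "(u$j1)^2 \<le> 0" using J00 unfolding en_def by simp
    moreover have "u$j1 \<noteq> 0" using j1 Jsupp unfolding supp_def by auto
    ultimately show False by simp
  qed
  have main: "card (J0 - T) \<le> card (J0 \<inter> T)"
  proof (rule ccontr)
    assume "\<not> ?thesis"
    then have ccard: "card (J0 \<inter> T) < card (J0 - T)" by simp
    define v0 where "v0 = restrict_vec v (T - I)"
    define y2 where "y2 = y - restrict_vec v I"
    define V where "V = norm v0"
    define dl where "dl = 2*e + e^2"
    define c where "c = 2*dl/(1-e)"
    have V0: "0 \<le> V" unfolding V_def by simp
    have sv0: "supp v0 \<subseteq> T - I" unfolding v0_def by (rule supp_restrict)
    have sy2: "supp y2 \<subseteq> I" unfolding y2_def using supp_diff[of y "restrict_vec v I"] sy supp_restrict[of v I] by blast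
    have vy: "v - y = v0 - y2" unfolding v0_def y2_def restrict_vec_def T_def supp_def
      by (auto simp: vec_eq_iff)
    have rr: "r = Phi *v v0 - Phi *v y2" unfolding rv vy by (rule matrix_vector_mult_diff_distrib)
    have dl0: "0 \<le> dl" unfolding dl_def using e by simp
    have B1: "norm (Phi *v y2) \<le> dl/(1-e) * V"
    proof -
      have "(Phi *v y2) \<bullet> r = 0" using normal_eq[OF ls' sy2] r_def by simp
      then have eq: "(Phi *v y2) \<bullet> (Phi *v v0) = (norm (Phi *v y2))^2"
        unfolding rr by (simp add: inner_diff_right power2_norm_eq_inner)
      have s1: "supp y2 \<subseteq> I \<union> T" using sy2 by auto
      have s2: "supp v0 \<subseteq> I \<union> T" using sv0 by auto
      have i0: "y2 \<bullet> v0 = 0" using sy2 sv0 by (intro inner_disjoint) auto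
      have "\<bar>(Phi *v y2) \<bullet> (Phi *v v0) - y2 \<bullet> v0\<bar> \<le> dl * norm y2 * norm v0"
        unfolding dl_def by (rule ric_inner[OF R s1 s2 cIT])
      then have h1: "(norm (Phi *v y2))^2 \<le> dl * norm y2 * V" using eq i0 unfolding V_def by simp
      have h2: "(1-e) * norm y2 \<le> norm (Phi *v y2)" by (rule ric_lo[OF R s1 cIT])
      have "norm y2 \<le> norm (Phi *v y2) / (1-e)" using h2 e by (simp add: field_simps)
      then have "dl * norm y2 * V \<le> dl * (norm (Phi *v y2) / (1-e)) * V"
        using dl0 V0 by (intro mult_right_mono mult_left_mono) auto
      then have h3: "norm (Phi *v y2) * norm (Phi *v y2) \<le> norm (Phi *v y2) * (dl/(1-e) * V)"
        using h1 by (simp add: power2_eq_square algebra_simps)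
      show ?thesis
      proof (cases "norm (Phi *v y2) = 0")
        case True then show ?thesis using dl0 V0 e by simp
      next
        case False then have P: "0 < norm (Phi *v y2)" by simp
        show ?thesis by (rule mult_left_le_imp_le[OF h3 P])
      qed
    qed
    have B2: "norm (restrict_vec (u - v0) A) \<le> c * V" if A: "A \<inter> I = {}" "card A \<le> n" for A
    proof -
      define z where "z = restrict_vec (u - v0) A"
      have sz: "supp z \<subseteq> A" unfolding z_def by (rule supp_restrict)
      have cAT: "card (A \<union> T) \<le> 2*n" using card_Un_le[of A T] A(2) cT by linarith
      have s1: "supp z \<subseteq> A \<union> T" "supp v0 \<subseteq> A \<union> T" using sz sv0 by auto
      have cA2: "card A \<le> 2*n" using A(2) by linarith
      have zz: "(norm z)^2 = z \<bullet> u - z \<bullet> v0" unfolding z_def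
        by (simp add: restrict_inner[symmetric] inner_diff_right)
      have zu: "z \<bullet> u = (Phi *v z) \<bullet> (Phi *v v0) - (Phi *v z) \<bullet> (Phi *v y2)"
        unfolding u_def transpose_inner rr by (simp add: inner_diff_right)
      have t1: "(Phi *v z) \<bullet> (Phi *v v0) - z \<bullet> v0 \<le> dl * norm z * V"
        using ric_inner[OF R s1 cAT] unfolding dl_def V_def by (simp add: abs_le_iff)
      have t2: "- ((Phi *v z) \<bullet> (Phi *v y2)) \<le> norm (Phi *v z) * norm (Phi *v y2)"
        using Cauchy_Schwarz_ineq2[of "Phi *v z" "Phi *v y2"] by (simp add: abs_le_iff)
      have t3: "norm (Phi *v z) \<le> (1+e) * norm z" by (rule ric_hi[OF R sz cA2])
      have t4: "norm (Phi *v z) * norm (Phi *v y2) \<le> ((1+e) * norm z) * (dl/(1-e) * V)"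
        using t3 B1 e by (intro mult_mono) auto
      have "(norm z)^2 \<le> dl * norm z * V + (1+e) * norm z * (dl/(1-e) * V)"
        using zz zu t1 t2 t4 by linarith
      also have "\<dots> = norm z * (c * V)" unfolding c_def using e by (simp add: field_simps)
      finally have h: "norm z * norm z \<le> norm z * (c*V)" by (simp add: power2_eq_square)
      have c0: "0 \<le> c" unfolding c_def using dl0 e by simp
      show ?thesis
      proof (cases "norm z = 0")
        case True then show ?thesis using c0 V0 unfolding z_def by simp
      next
        case False then have P: "0 < norm z" by simp
        show ?thesis using mult_left_le_imp_le[OF h P] unfolding z_def .
      qed
    qed
    have num1: "c \<le> 19/100" and num2: "32 * ln (real n) * c^2 < (1 - c)^2"
      using numeric[OF e(1) e2 lnn] unfolding c_def dl_def by auto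
    have bad: "en u (J0 - T) \<le> (c*V)^2"
    proof -
      have A: "(J0 - T) \<inter> I = {}" using disjI by auto
      have "card (J0 - T) \<le> card J" using J0J by (intro card_mono) auto
      then have cA: "card (J0 - T) \<le> n" using cJ by linarith
      have eqz: "restrict_vec (u - v0) (J0 - T) = restrict_vec u (J0 - T)"
        unfolding restrict_vec_def v0_def by (auto simp: vec_eq_iff)
      have "norm (restrict_vec u (J0 - T)) \<le> c * V" using B2[OF A cA] unfolding eqz .
      then have "(norm (restrict_vec u (J0 - T)))^2 \<le> (c*V)^2" by (rule power_mono) simp
      then show ?thesis by (simp only: norm_restrict_sq)
    qed
    have good: "((1-c)*V)^2 \<le> en u (T - I)"
    proof -
      have A: "(T - I) \<inter> I = {}" by auto
      have "card (T - I) \<le> card T" by (intro card_mono) auto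
      then have cA: "card (T - I) \<le> n" using cT by linarith
      have eqz: "restrict_vec (u - v0) (T - I) = restrict_vec u (T - I) - v0"
        unfolding restrict_vec_def v0_def by (auto simp: vec_eq_iff)
      have h: "norm (restrict_vec u (T - I) - v0) \<le> c * V" using B2[OF A cA] unfolding eqz .
      have "V \<le> norm (restrict_vec u (T - I)) + norm (v0 - restrict_vec u (T - I))"
        unfolding V_def by (rule norm_triangle_sub)
      then have "(1-c)*V \<le> norm (restrict_vec u (T - I))" using h by (simp add: norm_minus_commute algebra_simps)
      moreover have "0 \<le> (1-c)*V" using num1 V0 by simp
      ultimately have "((1-c)*V)^2 \<le> (norm (restrict_vec u (T - I)))^2" by (rule power_mono)
      then show ?thesis by (simp only: norm_restrict_sq)
    qed
    have JT: "en u (T - I) \<le> en u J"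
    proof (cases "card (supp u) \<le> n")
      case True then have "J = supp u" using Jd' unfolding romp_identify_def by simp
      then show ?thesis using en_supp by simp
    next
      case False
      then have J: "card J = n" "\<forall>i\<in>J. \<forall>j. j \<notin> J \<longrightarrow> \<bar>u$j\<bar> \<le> \<bar>u$i\<bar>"
        using Jd' unfolding romp_identify_def by auto
      define X where "X = (T - I) - J"
      define Y where "Y = J - (T - I)"
      have "card (T - I) \<le> card T" by (intro card_mono) auto
      then have cTI: "card (T - I) \<le> card J" using cT J(1) by linarith
      have cX: "card X = card (T - I) - card ((T - I) \<inter> J)" unfolding X_def by (rule card_Diff_subset_Int) auto
      have cY: "card Y = card J - card (J \<inter> (T - I))" unfolding Y_def by (rule card_Diff_subset_Int) auto
      have "card X \<le> card Y" using cX cY cTI by (simp add: Int_commute)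
      then have XY: "sum (\<lambda>i. (u$i)^2) X \<le> sum (\<lambda>i. (u$i)^2) Y"
      proof (rule sum_compare[rotated 2])
        fix a b assume a: "a \<in> X" and b: "b \<in> Y"
        then have "\<bar>u$a\<bar> \<le> \<bar>u$b\<bar>" using J(2) unfolding X_def Y_def by auto
        then show "(u$a)^2 \<le> (u$b)^2" by (simp add: abs_le_square_iff)
      qed auto
      have "en u (T - I) = en u ((T - I) \<inter> J) + en u X" unfolding en_def X_def by (rule sum.Int_Diff) simp
      also have "\<dots> \<le> en u (J \<inter> (T - I)) + en u Y" using XY unfolding en_def by (simp add: Int_commute)
      also have "\<dots> = en u J" unfolding en_def Y_def by (rule sum.Int_Diff[symmetric]) simp
      finally show ?thesis .
    qed
    obtain K where K: "K \<subseteq> J" "comparable u K" "en u J \<le> 4 * ln (real n) * en u K"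
      using reg[OF cJ n2] by blast
    have KJ0: "en u K \<le> en u J0"
    proof -
      have "norm (restrict_vec u K) \<le> norm (restrict_vec u J0)" using J0max K by auto
      then have "(norm (restrict_vec u K))^2 \<le> (norm (restrict_vec u J0))^2" by (rule power_mono) simp
      then show ?thesis by (simp only: norm_restrict_sq)
    qed
    have bg: "en u J0 < 8 * en u (J0 - T)" by (rule bad_good[OF compJ0 J0supp ccard])
    have L0: "0 < ln (real n)" using lnn by linarith
    have "((1-c)*V)^2 \<le> 4 * ln (real n) * en u K" using good JT K(3) by linarith
    also have "\<dots> \<le> 4 * ln (real n) * en u J0" using KJ0 L0 by simp
    also have "\<dots> < 4 * ln (real n) * (8 * en u (J0 - T))" using bg L0 by simp
    also have "\<dots> \<le> 4 * ln (real n) * (8 * (c*V)^2)" using bad L0 by simp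
    finally have f0: "((1-c)*V)^2 < 4 * ln (real n) * (8 * (c*V)^2)" .
    have q1: "((1-c)*V)^2 = (1-c)^2 * V^2" by (rule power_mult_distrib)
    have q2: "4 * ln (real n) * (8 * (c*V)^2) = (32 * ln (real n) * c^2) * V^2" by (simp add: power_mult_distrib)
    have f: "(1-c)^2 * V^2 < (32 * ln (real n) * c^2) * V^2" using f0 unfolding q1 q2 .
    have "(32 * ln (real n) * c^2) * V^2 \<le> (1-c)^2 * V^2" using num2 by (intro mult_right_mono) auto
    then show False using f by linarith
  qed
  show ?thesis using disjI J0ne main T_def by simp
qed



lemma card_IT: "card (I - T) \<le> card (I \<inter> T) \<Longrightarrow> card T \<le> n \<Longrightarrow> card (I \<union> (T::'d::finite set)) \<le> 2*n"
proof -
  assume inv: "card (I - T) \<le> card (I \<inter> T)" and cT: "card T \<le> n"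
  have "I \<union> T = (I - T) \<union> T" by auto
  moreover have "card ((I - T) \<union> T) = card (I - T) + card T" by (rule card_Un_disjoint) auto
  ultimately have "card (I \<union> T) = card (I - T) + card T" by simp
  moreover have "card (I \<inter> T) \<le> card T" by (rule card_mono) auto
  ultimately show ?thesis using inv cT by linarith
qed

lemma card_I: "card (I::'d::finite set) = card (I - T) + card (I \<inter> T)"
proof -
  have "I = (I - T) \<union> (I \<inter> T)" by auto
  moreover have "card ((I - T) \<union> (I \<inter> T)) = card (I - T) + card (I \<inter> T)" by (rule card_Un_disjoint) auto
  ultimately show ?thesis by simp
qed

theorem theorem1p3:
  fixes Phi :: "real^'d^'N" and v :: "real^'d" and n :: nat
  assumes "n \<ge> 1"
    and "RIC Phi (2 * n) (0.03 / sqrt (ln (real n)))"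
    and "sparse n v"
  shows "\<forall>k I r. (romp_step Phi (Phi *v v) n ^^ k) ({}, Phi *v v) (I, r) \<longrightarrow>
           k \<le> n \<and>
           (r \<noteq> 0 \<longrightarrow> (\<exists>s'. romp_step Phi (Phi *v v) n (I, r) s')) \<and>
           (r = 0 \<longrightarrow> supp v \<subseteq> I \<and> card I \<le> 2 * n)"
proof -
  define e where "e = 0.03 / sqrt (ln (real n))"
  have R: "RIC Phi (2*n) e" using assms(2) unfolding e_def .
  have e0: "0 < e" "e < 1" using R unfolding RIC_def by auto
  have s0: "sqrt (ln (real n)) \<noteq> 0" using e0 unfolding e_def by auto
  have lpos: "0 < ln (real n)"
  proof -
    have "ln (real n) \<noteq> 0" using s0 by auto
    moreover have "0 \<le> ln (real n)" using assms(1) by simp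
    ultimately show ?thesis by simp
  qed
  have n2: "2 \<le> n"
  proof (rule ccontr)
    assume "\<not> 2 \<le> n"
    then have "n = 1" using assms(1) by simp
    then show False using lpos by simp
  qed
  have e2: "e^2 * ln (real n) = 9/10000"
    unfolding e_def using lpos by (simp add: power_divide)
  have lnn: "1/2 \<le> ln (real n)"
  proof -
    have "ln 2 \<le> ln (real n)" using n2 by (subst ln_le_cancel_iff) auto
    then show ?thesis using ln2_ge by linarith
  qed
  define T where "T = supp v"
  define x where "x = Phi *v v"
  have cT: "card T \<le> n" using assms(3) unfolding sparse_def T_def .
  define Inv where "Inv k I r \<longleftrightarrow> (\<exists>y. ls_argmin Phi x I y \<and> r = x - Phi *v y) \<and>
      card (I - T) \<le> card (I \<inter> T) \<and> k \<le> card (I \<inter> T)" for k I r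
  have P: "\<And>I r. (romp_step Phi x n ^^ k) ({}, x) (I, r) \<Longrightarrow> Inv k I r" for k
  proof (induction k)
    case 0
    then have Ir: "I = {}" "r = x" by auto
    have "ls_argmin Phi x {} 0"
    proof -
      have z: "\<And>z::real^'d. supp z \<subseteq> {} \<Longrightarrow> z = 0" unfolding supp_def by (auto simp: vec_eq_iff)
      show ?thesis unfolding ls_argmin_def
      proof (intro conjI allI impI)
        show "supp (0::real^'d) \<subseteq> {}" unfolding supp_def by simp
        fix z :: "real^'d" assume "supp z \<subseteq> {}"
        then have "z = 0" by (rule z)
        then show "norm (x - Phi *v 0) \<le> norm (x - Phi *v z)" by simp
      qed
    qed
    then show ?case unfolding Inv_def Ir by (intro conjI exI[of _ 0]) auto
  next
    case (Suc k)
    from Suc.prems obtain s1 where s1: "(romp_step Phi x n ^^ k) ({}, x) s1" "romp_step Phi x n s1 (I, r)"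
      by (rule relpowp_Suc_E)
    obtain I1 r1 where s1e: "s1 = (I1, r1)" by (cases s1)
    have IH: "Inv k I1 r1" using Suc.IH s1(1) s1e by simp
    then obtain y1 where y1: "ls_argmin Phi x I1 y1" "r1 = x - Phi *v y1"
      and inv1: "card (I1 - T) \<le> card (I1 \<inter> T)" and k1: "k \<le> card (I1 \<inter> T)"
      unfolding Inv_def by blast
    from s1(2)[unfolded s1e romp_step_def Let_def] obtain J J0 y' where
      st: "r1 \<noteq> 0" "romp_identify n (transpose Phi *v r1) J"
        "romp_regularize (transpose Phi *v r1) J J0" "ls_argmin Phi x (I1 \<union> J0) y'"
        "(I, r) = (I1 \<union> J0, x - Phi *v y')"
      by auto
    have C: "J0 \<inter> I1 = {} \<and> J0 \<noteq> {} \<and> card (J0 - supp v) \<le> card (J0 \<inter> supp v)"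
    proof (rule core[OF R e2 lnn n2])
      show "card (supp v) \<le> n" using cT T_def by simp
      show "ls_argmin Phi (Phi *v v) I1 y1" using y1(1) x_def by simp
      show "card (I1 - supp v) \<le> card (I1 \<inter> supp v)" using inv1 T_def by simp
      show "Phi *v v - Phi *v y1 \<noteq> 0" using st(1) y1(2) x_def by simp
      show "romp_identify n (transpose Phi *v (Phi *v v - Phi *v y1)) J" using st(2) y1(2) x_def by simp
      show "romp_regularize (transpose Phi *v (Phi *v v - Phi *v y1)) J J0" using st(3) y1(2) x_def by simp
    qed
    then have dis: "J0 \<inter> I1 = {}" and ne: "J0 \<noteq> {}" and cc: "card (J0 - T) \<le> card (J0 \<inter> T)"
      unfolding T_def by auto
    have I: "I = I1 \<union> J0" and r: "r = x - Phi *v y'" using st(5) by auto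
    have c1: "card (I - T) = card (I1 - T) + card (J0 - T)"
    proof -
      have "I - T = (I1 - T) \<union> (J0 - T)" unfolding I by auto
      moreover have "card ((I1 - T) \<union> (J0 - T)) = card (I1 - T) + card (J0 - T)"
        by (rule card_Un_disjoint) (use dis in auto)
      ultimately show ?thesis by simp
    qed
    have c2: "card (I \<inter> T) = card (I1 \<inter> T) + card (J0 \<inter> T)"
    proof -
      have "I \<inter> T = (I1 \<inter> T) \<union> (J0 \<inter> T)" unfolding I by auto
      moreover have "card ((I1 \<inter> T) \<union> (J0 \<inter> T)) = card (I1 \<inter> T) + card (J0 \<inter> T)"
        by (rule card_Un_disjoint) (use dis in auto)
      ultimately show ?thesis by simp
    qed
    have pos: "1 \<le> card (J0 \<inter> T)"
    proof (rule ccontr)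
      assume "\<not> 1 \<le> card (J0 \<inter> T)"
      then have "card (J0 \<inter> T) = 0" by arith
      then have a: "J0 \<inter> T = {}" using card_eq_0_iff[of "J0 \<inter> T"] by simp
      then have "card (J0 - T) = 0" using cc by simp
      then have "J0 - T = {}" using card_eq_0_iff[of "J0 - T"] by simp
      then show False using a ne by auto
    qed
    have "ls_argmin Phi x I y'" using st(4) I by simp
    then show ?case unfolding Inv_def using r c1 c2 inv1 k1 cc pos by auto
  qed
  show ?thesis
  proof (intro allI impI)
    fix k I r assume kr: "(romp_step Phi (Phi *v v) n ^^ k) ({}, Phi *v v) (I, r)"
    then have "Inv k I r" using P x_def by simp
    then obtain y where y: "ls_argmin Phi x I y" "r = x - Phi *v y"
      and inv: "card (I - T) \<le> card (I \<inter> T)" and kk: "k \<le> card (I \<inter> T)"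
      unfolding Inv_def by blast
    have "card (I \<inter> T) \<le> card T" by (rule card_mono) auto
    then have A: "k \<le> n" using kk cT by linarith
    have B: "r \<noteq> 0 \<longrightarrow> (\<exists>s'. romp_step Phi (Phi *v v) n (I, r) s')"
      using step_exists by blast
    have cIT: "card (I \<union> T) \<le> 2*n" by (rule card_IT[OF inv cT])
    have sy: "supp y \<subseteq> I" using y(1) unfolding ls_argmin_def by auto
    have C1: "r = 0 \<longrightarrow> supp v \<subseteq> I"
    proof
      assume r0: "r = 0"
      have sw: "supp (v - y) \<subseteq> I \<union> T" using supp_diff[of v y] sy T_def by auto
      have "(1-e) * norm (v - y) \<le> norm (Phi *v (v - y))" by (rule ric_lo[OF R sw cIT])
      also have "Phi *v (v - y) = r" using y(2) x_def by (simp add: matrix_vector_mult_diff_distrib)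
      finally have "(1-e) * norm (v - y) \<le> 0" using r0 by simp
      then have "norm (v - y) \<le> 0" using e0 by (simp add: mult_le_0_iff)
      then have "v = y" by simp
      then show "supp v \<subseteq> I" using sy by simp
    qed
    have "card I = card (I - T) + card (I \<inter> T)" by (rule card_I)
    then have C2: "card I \<le> 2*n" using inv \<open>card (I \<inter> T) \<le> card T\<close> cT by linarith
    show "k \<le> n \<and> (r \<noteq> 0 \<longrightarrow> (\<exists>s'. romp_step Phi (Phi *v v) n (I, r) s')) \<and>
           (r = 0 \<longrightarrow> supp v \<subseteq> I \<and> card I \<le> 2 * n)" using A B C1 C2 by blast
  qed
qed


end
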